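(* Let $d\le n$, $\gamma>1$, and $\lambda_1,\lambda_2>0$ with $\lambda_1+\lambda_2=1$. For every $v\in\mathbb R^d$ with $\|v\|_2\le1$ there exist $\mathbf X_1,\mathbf X_2\in\mathfrak X(\gamma)$ and $1$-sparse $\beta_1,\beta_2\in\mathbb R^d$ such that, with $\Sigma_k=\frac1n\mathbf X_k^\top\mathbf X_k$, 1. $\lambda_1\Sigma_1+\lambda_2\Sigma_2=I_d$, and 2. $\lambda_1\Sigma_1\beta_1+\lambda_2\Sigma_2\beta_2=v=\vartheta_{\boldsymbol\lambda}$, where $\vartheta_{\boldsymbol\lambda}=\arg\min_{\vartheta}\sum_{k=1}^2\lambda_k\|\mathbf X_k(\vartheta-\beta_k)\|_2^2$.
   Context: $\mathfrak X(\gamma)=\{\mathbf X\in\mathbb R^{n\times d}:\gamma^{-1}I_d\preceq n^{-1}\mathbf X^\top\mathbf X\preceq\gamma I_d\}$. A vector is $1$-sparse if it has at most one nonzero entry. *)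

theory Defs
  imports "HOL-Analysis.Analysis"
begin

definition loewner_le :: "real^'d^'d \<Rightarrow> real^'d^'d \<Rightarrow> bool" where
  "loewner_le A B \<longleftrightarrow> (\<forall>x. x \<bullet> (A *v x) \<le> x \<bullet> (B *v x))"

definition sample_cov :: "real^'d^'n \<Rightarrow> real^'d^'d" where
  "sample_cov X = (1 / real CARD('n)) *\<^sub>R (transpose X ** X)"

definition design_class :: "real \<Rightarrow> (real^'d^'n) set" where
  "design_class \<gamma> = {X. loewner_le ((1/\<gamma>) *\<^sub>R mat 1) (sample_cov X)
                        \<and> loewner_le (sample_cov X) (\<gamma> *\<^sub>R mat 1)}"

definition one_sparse :: "real^'d \<Rightarrow> bool" where
  "one_sparse b \<longleftrightarrow> card {i. b $ i \<noteq> 0} \<le> 1"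

definition argmin_set :: "('a \<Rightarrow> real) \<Rightarrow> 'a set" where
  "argmin_set f = {x. \<forall>y. f x \<le> f y}"

end

theory Submission imports Defs begin

definition Pm :: "real^'d \<Rightarrow> real^'d^'d" where "Pm u = (\<chi> i j. u$i * u$j)"

definition Xm :: "('d \<Rightarrow> 'n) \<Rightarrow> real \<Rightarrow> real^'d \<Rightarrow> real^'d^'n" where
  "Xm f \<mu> u = (\<chi> i j. if i \<in> range f then sqrt (real CARD('n)) *
      ((if inv f i = j then 1 else 0) + \<mu> * u$(inv f i) * u$j) else 0)"

lemma sum_range_inj:
  fixes f :: "'d::finite \<Rightarrow> 'n::finite"
  assumes "inj f"
  shows "(\<Sum>i\<in>UNIV. if i \<in> range f then g (inv f i) else 0) = (\<Sum>k\<in>UNIV. (g k :: real))"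
proof -
  have "(\<Sum>i\<in>UNIV. if i \<in> range f then g (inv f i) else 0) = (\<Sum>i\<in>range f. g (inv f i))"
    by (simp add: sum.If_cases)
  also have "\<dots> = (\<Sum>k\<in>UNIV. g (inv f (f k)))"
    using assms by (simp add: sum.reindex)
  also have "\<dots> = (\<Sum>k\<in>UNIV. g k)" using assms by simp
  finally show ?thesis .
qed

lemma Pm_mult: "Pm u *v x = (u \<bullet> x) *\<^sub>R u"
  by (simp add: Pm_def vec_eq_iff matrix_vector_mult_def inner_vec_def sum_distrib_left algebra_simps)

lemma sample_cov_Xm:
  fixes f :: "'d::finite \<Rightarrow> 'n::finite"
  assumes "inj f"
  shows "sample_cov (Xm f \<mu> u) = mat 1 + (2*\<mu> + \<mu>^2 * (u \<bullet> u)) *\<^sub>R Pm u"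
proof -
  have n: "real CARD('n) > 0" by simp
  have "(sample_cov (Xm f \<mu> u)) $ a $ b = (mat 1 + (2*\<mu> + \<mu>^2 * (u \<bullet> u)) *\<^sub>R Pm u) $ a $ b" for a b
  proof -
    have "(sample_cov (Xm f \<mu> u)) $ a $ b = (1 / real CARD('n)) *
       (\<Sum>i\<in>UNIV. if i \<in> range f then real CARD('n) * (((if inv f i = a then 1 else 0) + \<mu> * u$(inv f i) * u$a) *
            ((if inv f i = b then 1 else 0) + \<mu> * u$(inv f i) * u$b)) else 0)"
      unfolding sample_cov_def Xm_def
      by (auto simp: matrix_matrix_mult_def transpose_def intro!: sum.cong)
    also have "\<dots> = (\<Sum>k\<in>UNIV. ((if k = a then 1 else 0) + \<mu> * u$k * u$a) *
            ((if k = b then 1 else 0) + \<mu> * u$k * u$b))"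
      using n sum_range_inj[OF assms, where g = "\<lambda>k. real CARD('n) * (((if k = a then 1 else 0) + \<mu> * u$k * u$a) *
            ((if k = b then 1 else 0) + \<mu> * u$k * u$b))"]
      by (simp add: sum_distrib_left[symmetric])
    also have "\<dots> = (\<Sum>k\<in>UNIV. (if k = a then (if a = b then 1 else 0) else 0) + (if k = a then \<mu> * u$a * u$b else 0)
         + (if k = b then \<mu> * u$a * u$b else 0) + \<mu>^2 * u$a * u$b * (u$k * u$k))"
      by (rule sum.cong) (auto simp: algebra_simps power2_eq_square)
    also have "\<dots> = (if a = b then 1 else 0) + 2 * \<mu> * u$a * u$b + \<mu>^2 * u$a * u$b * (u \<bullet> u)"
      by (simp add: sum.distrib sum_distrib_left[symmetric] inner_vec_def)
    also have "\<dots> = (mat 1 + (2*\<mu> + \<mu>^2 * (u \<bullet> u)) *\<^sub>R Pm u) $ a $ b"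
      by (simp add: mat_def Pm_def algebra_simps)
    finally show ?thesis .
  qed
  then show ?thesis by (simp add: vec_eq_iff)
qed

lemma norm_Xm:
  fixes f :: "'d::finite \<Rightarrow> 'n::finite"
  assumes "inj f"
  shows "(norm (Xm f \<mu> u *v z))^2 = real CARD('n) * (z \<bullet> z + (2*\<mu> + \<mu>^2 * (u \<bullet> u)) * (u \<bullet> z)^2)"
proof -
  have "(norm (Xm f \<mu> u *v z))^2 = (\<Sum>i\<in>UNIV. if i \<in> range f then real CARD('n) *
        (z $ (inv f i) + \<mu> * u $ (inv f i) * (u \<bullet> z))^2 else 0)"
  proof -
    have c: "(Xm f \<mu> u *v z) $ i = (if i \<in> range f then sqrt (real CARD('n)) *
        (z $ (inv f i) + \<mu> * u $ (inv f i) * (u \<bullet> z)) else 0)" for i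
    proof (cases "i \<in> range f")
      case True
      then obtain k where k: "i = f k" by auto
      have "(Xm f \<mu> u *v z) $ i = (\<Sum>j\<in>UNIV. (if k = j then sqrt (real CARD('n)) * z $ j else 0)
          + sqrt (real CARD('n)) * \<mu> * u $ k * (u $ j * z $ j))"
        using True k \<open>inj f\<close>
        by (auto simp: Xm_def matrix_vector_mult_def algebra_simps intro!: sum.cong)
      also have "\<dots> = sqrt (real CARD('n)) * (z $ k + \<mu> * u $ k * (u \<bullet> z))"
        by (simp add: sum.distrib sum_distrib_left inner_vec_def algebra_simps)
      finally show ?thesis using True k \<open>inj f\<close> by simp
    qed (simp add: Xm_def matrix_vector_mult_def)
    have sq: "sqrt (real CARD('n)) * t * (sqrt (real CARD('n)) * t) = real CARD('n) * t^2" for t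
      by (metis mult.assoc mult.commute power2_eq_square real_sqrt_mult_self abs_of_nat)
    show ?thesis unfolding power2_norm_eq_inner inner_vec_def[of "Xm f \<mu> u *v z"]
      using sq by (intro sum.cong) (auto simp: c)
  qed
  also have "\<dots> = real CARD('n) * (\<Sum>k\<in>UNIV. (z $ k + \<mu> * u $ k * (u \<bullet> z))^2)"
    using sum_range_inj[OF assms, where g = "\<lambda>k. real CARD('n) * (z $ k + \<mu> * u $ k * (u \<bullet> z))^2"]
    by (simp add: sum_distrib_left)
  also have "(\<Sum>k\<in>UNIV. (z $ k + \<mu> * u $ k * (u \<bullet> z))^2) = (\<Sum>k\<in>UNIV. z$k*z$k + 2*\<mu>*(u \<bullet> z) * (u$k*z$k) + \<mu>^2*(u \<bullet> z)^2 * (u$k*u$k))"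
    by (rule sum.cong) (auto simp: power2_eq_square algebra_simps)
  also have "\<dots> = z \<bullet> z + (2*\<mu> + \<mu>^2 * (u \<bullet> u)) * (u \<bullet> z)^2"
  proof -
    have "(\<Sum>k\<in>UNIV. z$k*z$k + 2*\<mu> * ss * (u$k*z$k) + \<mu>^2 * ss^2 * (u$k*u$k)) =
        z \<bullet> z + 2*\<mu> * ss*(u \<bullet> z) + \<mu>^2 * ss^2*(u \<bullet> u)" for ss
      by (simp add: inner_vec_def sum.distrib sum_distrib_left)
    from this[of "u \<bullet> z"] show ?thesis by (simp add: power2_eq_square algebra_simps)
  qed
  finally show ?thesis .
qed

lemma quad_id:
  fixes e u h v :: "'a::real_inner"
  assumes "l1 + l2 = 1" "l1*a1 + l2*a2 = 0"
    and "v = (l1*b + l2*c) *\<^sub>R e + (l1*a1*(b-c)*(u \<bullet> e)) *\<^sub>R u"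
  shows "l1*((v+h-b*\<^sub>R e)\<bullet>(v+h-b*\<^sub>R e) + a1*(u\<bullet>(v+h-b*\<^sub>R e))^2)
       + l2*((v+h-c*\<^sub>R e)\<bullet>(v+h-c*\<^sub>R e) + a2*(u\<bullet>(v+h-c*\<^sub>R e))^2)
     = l1*((v-b*\<^sub>R e)\<bullet>(v-b*\<^sub>R e) + a1*(u\<bullet>(v-b*\<^sub>R e))^2)
       + l2*((v-c*\<^sub>R e)\<bullet>(v-c*\<^sub>R e) + a2*(u\<bullet>(v-c*\<^sub>R e))^2) + h \<bullet> h"
proof -
  have hv: "h \<bullet> v = (l1*b + l2*c) * (h \<bullet> e) + (l1*a1*(b-c)*(u \<bullet> e)) * (h \<bullet> u)"
    using assms(3) by (simp add: inner_simps)
  have uv: "u \<bullet> v = (l1*b + l2*c) * (u \<bullet> e) + (l1*a1*(b-c)*(u \<bullet> e)) * (u \<bullet> u)"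
    using assms(3) by (simp add: inner_simps)
  have l2: "l2 = 1 - l1" using assms by simp
  have a: "l2*a2 = - (l1*a1)" using assms by simp
  show ?thesis
    apply (simp add: inner_simps inner_commute[of v h] inner_commute[of e h] inner_commute[of u h] inner_commute[of v e] power2_eq_square)
    apply (simp only: hv uv)
    using a l2 by algebra
qed

lemma mu_sol:
  fixes N a :: real
  assumes "N > 0" "1 + a*N \<ge> 0"
  shows "2*((sqrt (1 + a*N) - 1)/N) + ((sqrt (1 + a*N) - 1)/N)^2 * N = a"
proof -
  define s where "s = sqrt (1 + a*N)"
  have s2: "s^2 = 1 + a*N" using assms s_def by simp
  have "2*((s - 1)/N) + ((s - 1)/N)^2 * N = (s^2 - 1)/N"
    using assms by (simp add: field_simps power2_eq_square)
  also have "\<dots> = a" using s2 assms by simp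
  finally show ?thesis unfolding s_def .
qed

lemma Sig_mult: "(mat 1 + a *\<^sub>R Pm u) *v x = x + (a * (u \<bullet> x)) *\<^sub>R u"
proof -
  have "(mat 1 + a *\<^sub>R Pm u) *v x = mat 1 *v x + a *\<^sub>R (Pm u *v x)"
    by (simp add: matrix_vector_mult_add_rdistrib scaleR_matrix_vector_assoc)
  then show ?thesis by (simp add: Pm_mult)
qed

lemma cs2: "(u \<bullet> x)^2 \<le> (u \<bullet> u) * (x \<bullet> (x::'a::real_inner))"
proof -
  have "\<bar>u \<bullet> x\<bar> \<le> norm u * norm x" by (rule Cauchy_Schwarz_ineq2)
  then have "\<bar>u \<bullet> x\<bar>^2 \<le> (norm u * norm x)^2" by (rule power_mono) simp
  then show ?thesis by (simp add: power_mult_distrib power2_norm_eq_inner)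
qed

lemma design_Xm:
  fixes f :: "'d::finite \<Rightarrow> 'n::finite"
  assumes "inj f" "u \<bullet> u > 0" "1 + a * (u \<bullet> u) \<ge> 0"
    and lo: "1/\<gamma> \<le> 1 + min 0 a * (u \<bullet> u)" and hi: "1 + max 0 a * (u \<bullet> u) \<le> \<gamma>"
  shows "Xm f ((sqrt (1 + a*(u \<bullet> u)) - 1)/(u \<bullet> u)) u \<in> design_class \<gamma>"
    and "sample_cov (Xm f ((sqrt (1 + a*(u \<bullet> u)) - 1)/(u \<bullet> u)) u) = mat 1 + a *\<^sub>R Pm u"
proof -
  show S: "sample_cov (Xm f ((sqrt (1 + a*(u \<bullet> u)) - 1)/(u \<bullet> u)) u) = mat 1 + a *\<^sub>R Pm u"
    using sample_cov_Xm[OF assms(1)] mu_sol[OF assms(2,3)] by simp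
  have q: "x \<bullet> ((mat 1 + a *\<^sub>R Pm u) *v x) = x \<bullet> x + a * (u \<bullet> x)^2" for x
    by (simp add: Sig_mult inner_simps power2_eq_square inner_commute)
  have sc: "x \<bullet> ((c *\<^sub>R (mat 1::real^'d^'d)) *v x) = c * (x \<bullet> x)" for c and x :: "real^'d"
    by (metis scaleR_matrix_vector_assoc matrix_vector_mul_lid inner_scaleR_right)
  have bnd: "1/\<gamma> * (x \<bullet> x) \<le> x \<bullet> x + a * (u \<bullet> x)^2 \<and> x \<bullet> x + a * (u \<bullet> x)^2 \<le> \<gamma> * (x \<bullet> x)" for x
  proof -
    have c: "(u \<bullet> x)^2 \<le> (u \<bullet> u) * (x \<bullet> x)" by (rule cs2)
    have p: "0 \<le> (u \<bullet> x)^2" "0 \<le> x \<bullet> x" by auto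
    have l1: "1/\<gamma> * (x \<bullet> x) \<le> (1 + min 0 a * (u \<bullet> u)) * (x \<bullet> x)"
      by (rule mult_right_mono[OF lo p(2)])
    have l2: "min 0 a * ((u \<bullet> u) * (x \<bullet> x)) \<le> a * (u \<bullet> x)^2"
    proof (cases "a \<ge> 0")
      case True then show ?thesis using p by (simp add: min_def)
    next
      case False
      then have "a * ((u \<bullet> u) * (x \<bullet> x)) \<le> a * (u \<bullet> x)^2" using c
        by (simp add: mult_left_mono_neg)
      then show ?thesis using False by (simp add: min_def)
    qed
    have h1: "(1 + max 0 a * (u \<bullet> u)) * (x \<bullet> x) \<le> \<gamma> * (x \<bullet> x)"
      by (rule mult_right_mono[OF hi p(2)])
    have h2: "a * (u \<bullet> x)^2 \<le> max 0 a * ((u \<bullet> u) * (x \<bullet> x))"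
    proof (cases "a \<ge> 0")
      case True then show ?thesis using c by (simp add: max_def mult_left_mono)
    next
      case False
      then have "a * (u \<bullet> x)^2 \<le> 0" using p by (simp add: mult_nonpos_nonneg)
      then show ?thesis using False p by (simp add: max_def)
    qed
    show ?thesis using l1 l2 h1 h2 by (simp add: algebra_simps)
  qed
  show "Xm f ((sqrt (1 + a*(u \<bullet> u)) - 1)/(u \<bullet> u)) u \<in> design_class \<gamma>"
    unfolding design_class_def loewner_le_def using bnd by (simp add: S q sc)
qed


lemma one_sparse_axis: "one_sparse (b *\<^sub>R axis i (1::real))"
proof -
  have "{j. (b *\<^sub>R axis i (1::real)) $ j \<noteq> 0} \<subseteq> {i}" by (auto simp: axis_def)
  then have "card {j. (b *\<^sub>R axis i (1::real)) $ j \<noteq> 0} \<le> card {i}" by (rule card_mono[rotated]) simp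
  then show ?thesis by (simp add: one_sparse_def)
qed

theorem claimD1:
  fixes \<gamma> l1 l2 :: real and v :: "real^'d"
  assumes "CARD('d) \<le> CARD('n)"
    and "\<gamma> > 1"
    and "l1 > 0" and "l2 > 0" and "l1 + l2 = 1"
    and "norm v \<le> 1"
  shows "\<exists>(X1::real^'d^'n) (X2::real^'d^'n) \<beta>1 \<beta>2.
           X1 \<in> design_class \<gamma> \<and> X2 \<in> design_class \<gamma> \<and>
           one_sparse \<beta>1 \<and> one_sparse \<beta>2 \<and>
           l1 *\<^sub>R sample_cov X1 + l2 *\<^sub>R sample_cov X2 = mat 1 \<and>
           l1 *\<^sub>R (sample_cov X1 *v \<beta>1) + l2 *\<^sub>R (sample_cov X2 *v \<beta>2) = v \<and>
           argmin_set (\<lambda>\<theta>. l1 * (norm (X1 *v (\<theta> - \<beta>1)))\<^sup>2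
                           + l2 * (norm (X2 *v (\<theta> - \<beta>2)))\<^sup>2) = {v}"
proof -
  obtain f :: "'d \<Rightarrow> 'n" where f: "inj f"
    using card_le_inj[of "UNIV::'d set" "UNIV::'n set"] assms(1) by auto
  define i0 :: 'd where "i0 = undefined"
  define e :: "real^'d" where "e = axis i0 1"
  define v1 where "v1 = v $ i0"
  define u where "u = v + (1 - v1) *\<^sub>R e"
  define N where "N = u \<bullet> u"
  have ee: "e \<bullet> e = 1" by (simp add: e_def)
  have ue: "u \<bullet> e = 1" by (simp add: u_def e_def v1_def inner_axis inner_simps)
  have N1: "N \<ge> 1" using cs2[of u e] ue ee N_def by simp
  have vdec: "v = (v1 - 1) *\<^sub>R e + u" by (simp add: u_def algebra_simps)
  define k where "k = (\<gamma> - 1) / \<gamma>"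
  define r where "r = N / (1 + N)"
  have k0: "0 < k" "k \<le> 1" "k \<le> \<gamma> - 1" "1 - k = 1/\<gamma>"
  proof -
    have gg: "\<gamma> * 2 \<le> 1 + \<gamma> * \<gamma>" using zero_le_square[of "\<gamma> - 1"] by (simp add: algebra_simps)
    show "0 < k" "k \<le> 1" "k \<le> \<gamma> - 1" "1 - k = 1/\<gamma>"
      using assms(2) gg by (auto simp: k_def field_simps)
  qed
  have r0: "0 \<le> r" "r \<le> 1" using N1 by (auto simp: r_def field_simps)
  define t where "t = l2 * k / (1 + N)"
  define a1 where "a1 = t"
  define a2 where "a2 = - l1 * t / l2"
  have t0: "t > 0" using assms(4) k0 N1 by (simp add: t_def)
  have a1N: "a1 * N = l2 * k * r" by (simp add: a1_def t_def r_def)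
  have a2N: "a2 * N = - (l1 * k * r)" using assms(4) by (simp add: a2_def t_def r_def)
  have lkr: "l2 * k * r \<le> k" "l1 * k * r \<le> k"
  proof -
    have l1le: "l1 \<le> 1" "l2 \<le> 1" using assms(3,4,5) by linarith+
    have "l2 * r \<le> 1" by (rule mult_le_one[OF l1le(2) r0])
    then have "k * (l2 * r) \<le> k * 1" using k0(1) by (intro mult_left_mono) auto
    then show "l2 * k * r \<le> k" by (simp add: algebra_simps)
    have "l1 * r \<le> 1" by (rule mult_le_one[OF l1le(1) r0])
    then have "k * (l1 * r) \<le> k * 1" using k0(1) by (intro mult_left_mono) auto
    then show "l1 * k * r \<le> k" by (simp add: algebra_simps)
  qed
  have hi1: "1 + l2 * k * r \<le> \<gamma>" "1/\<gamma> \<le> 1 - l1 * k * r" "1/\<gamma> \<le> 1" "1 \<le> \<gamma>"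
    using lkr k0 assms(2) by linarith+
  have lk1: "l1 * k * r \<le> 1"
  proof -
    have "0 < 1/\<gamma>" using assms(2) by simp
    then show ?thesis using hi1(2) by linarith
  qed
  have lkr0: "0 \<le> l2 * k * r" "0 \<le> l1 * k * r" using assms(3,4) k0 r0 by auto
  have aa: "l1 * a1 + l2 * a2 = 0" using assms(4) by (simp add: a1_def a2_def)
  define \<mu>1 where "\<mu>1 = (sqrt (1 + a1 * N) - 1) / N"
  define \<mu>2 where "\<mu>2 = (sqrt (1 + a2 * N) - 1) / N"
  have Npos: "u \<bullet> u > 0" using N1 N_def by linarith
  have X1: "Xm f \<mu>1 u \<in> design_class \<gamma>" "sample_cov (Xm f \<mu>1 u) = mat 1 + a1 *\<^sub>R Pm u"
    using design_Xm[OF f Npos, of a1 \<gamma>] a1N hi1 lkr0 t0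
    unfolding \<mu>1_def N_def by (auto simp: a1_def)
  have X2: "Xm f \<mu>2 u \<in> design_class \<gamma>" "sample_cov (Xm f \<mu>2 u) = mat 1 + a2 *\<^sub>R Pm u"
  proof -
    have a2n: "a2 \<le> 0" using t0 assms(3,4) by (simp add: a2_def)
    show "Xm f \<mu>2 u \<in> design_class \<gamma>" "sample_cov (Xm f \<mu>2 u) = mat 1 + a2 *\<^sub>R Pm u"
      using design_Xm[OF f Npos, of a2 \<gamma>] a2N hi1 lkr0 k0 a2n
      unfolding \<mu>2_def N_def by (auto simp: min_def max_def)
  qed
  define D where "D = 1 / (l1 * t)"
  define c where "c = v1 - 1 - l1 * D"
  define b where "b = c + D"
  have bc1: "l1 * b + l2 * c = v1 - 1" proof -
    have l2e: "l2 = 1 - l1" using assms(5) by simp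
    show ?thesis by (simp add: b_def c_def l2e algebra_simps)
  qed
  have bc2: "l1 * a1 * (b - c) = 1" using assms(3) t0 by (simp add: b_def D_def a1_def)
  have bc3: "l1 * a1 * b + l2 * a2 * c = 1" using bc2 aa
    by (smt (verit) mult.assoc mult.commute right_diff_distrib)
  let ?S1 = "mat 1 + a1 *\<^sub>R Pm u" and ?S2 = "mat 1 + a2 *\<^sub>R Pm u"
  have E1: "l1 *\<^sub>R ?S1 + l2 *\<^sub>R ?S2 = mat 1"
  proof -
    have "l1 *\<^sub>R ?S1 + l2 *\<^sub>R ?S2 = (l1 + l2) *\<^sub>R mat 1 + (l1 * a1 + l2 * a2) *\<^sub>R Pm u"
      by (simp add: algebra_simps)
    then show ?thesis using aa assms(5) by simp
  qed
  have E2: "l1 *\<^sub>R (?S1 *v (b *\<^sub>R e)) + l2 *\<^sub>R (?S2 *v (c *\<^sub>R e)) = v"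
  proof -
    have "l1 *\<^sub>R (?S1 *v (b *\<^sub>R e)) + l2 *\<^sub>R (?S2 *v (c *\<^sub>R e))
        = (l1 * b + l2 * c) *\<^sub>R e + (l1 * a1 * b + l2 * a2 * c) *\<^sub>R u"
      unfolding Sig_mult by (simp add: ue algebra_simps)
    then show ?thesis using bc1 bc3 vdec by simp
  qed
  define F where "F = (\<lambda>\<theta>. l1 * (norm (Xm f \<mu>1 u *v (\<theta> - b *\<^sub>R e)))\<^sup>2
                           + l2 * (norm (Xm f \<mu>2 u *v (\<theta> - c *\<^sub>R e)))\<^sup>2)"
  have m1: "2*\<mu>1 + \<mu>1^2 * (u \<bullet> u) = a1"
    unfolding \<mu>1_def N_def by (rule mu_sol[OF Npos]) (use a1N lkr0 N_def in simp)
  have m2: "2*\<mu>2 + \<mu>2^2 * (u \<bullet> u) = a2"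
    unfolding \<mu>2_def N_def by (rule mu_sol[OF Npos]) (use a2N lk1 N_def in simp)
  have Fq: "F \<theta> = real CARD('n) * (l1*((\<theta>-b*\<^sub>R e)\<bullet>(\<theta>-b*\<^sub>R e) + a1*(u\<bullet>(\<theta>-b*\<^sub>R e))^2)
       + l2*((\<theta>-c*\<^sub>R e)\<bullet>(\<theta>-c*\<^sub>R e) + a2*(u\<bullet>(\<theta>-c*\<^sub>R e))^2))" for \<theta>
    unfolding F_def norm_Xm[OF f] m1 m2 by (simp only: distrib_left mult.left_commute)
  have vform: "v = (l1*b + l2*c) *\<^sub>R e + (l1*a1*(b-c)*(u \<bullet> e)) *\<^sub>R u"
    using bc1 bc2 ue vdec by simp
  have Fid: "F \<theta> = F v + real CARD('n) * ((\<theta> - v) \<bullet> (\<theta> - v))" for \<theta>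
  proof -
    have vv: "v + (\<theta> - v) = \<theta>" by simp
    have vz: "v = v + 0" by simp
    show ?thesis using quad_id[OF assms(5) aa vform, of "\<theta> - v"] unfolding Fq vv
      by (simp only: distrib_left)
  qed
  have AM: "argmin_set F = {v}"
  proof -
    have "x \<in> argmin_set F \<longleftrightarrow> x = v" for x
    proof
      assume "x \<in> argmin_set F"
      then have "F x \<le> F v" by (simp add: argmin_set_def)
      then have "real CARD('n) * ((x - v) \<bullet> (x - v)) \<le> 0" using Fid[of x] by simp
      then have "(x - v) \<bullet> (x - v) \<le> 0" by (simp add: mult_le_0_iff)
      then have "(x - v) \<bullet> (x - v) = 0" using inner_ge_zero[of "x - v"] by linarith
      then show "x = v" by simp
    next
      assume "x = v"
      have "F v \<le> F y" for y
      proof -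
        have "0 \<le> real CARD('n) * ((y - v) \<bullet> (y - v))" by simp
        then show ?thesis using Fid[of y] by linarith
      qed
      then show "x \<in> argmin_set F" using \<open>x = v\<close> by (simp add: argmin_set_def)
    qed
    then show ?thesis by auto
  qed
  show ?thesis
    apply (rule exI[of _ "Xm f \<mu>1 u"], rule exI[of _ "Xm f \<mu>2 u"],
           rule exI[of _ "b *\<^sub>R e"], rule exI[of _ "c *\<^sub>R e"])
    using X1 X2 E1 E2 AM one_sparse_axis[of b i0] one_sparse_axis[of c i0] unfolding F_def e_def by simp
qed

end
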